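(* The name-generation monad $T$ on $[\mathsf{Inj},\mathsf{Set}]$ is observational.
   Context: $\mathsf{Inj}$ is the category of finite sets and injections; $[\mathsf{Inj},\mathsf{Set}]$ is the functor category (cartesian, products computed pointwise). The name-generation monad is given by $(TX)(a)=\operatorname{colim}_{b\in\mathsf{Inj}}X(a+b)$ (the colimit of the functor $b\mapsto X(a+b)$, acting on injections $b\to b'$ via $1_a+(-)$), with unit induced by $b=\emptyset$ and multiplication induced by $(a+b)+c\cong a+(b+c)$; it is a commutative (and affine) monad. For a commutative monad $T$ on a cartesian monoidal category: $\mathsf{Kl}(T)$ has morphisms $f:A\rightsquigarrow B$ corresponding to $f^\sharp:A\to TB$, composition $(g\circledcirc f)^\sharp=\mu\circ T(g^\sharp)\circ f^\sharp$, tensor $\otimes$ equal to $\times$ on objects with $(f\otimes g)^\sharp=\nabla\circ(f^\sharp\times g^\sharp)$; $\mathsf{force}_A^\sharp=1_{TA}$; $\mathsf{copy}_n^\sharp=\eta\circ\Delta_n:TX\to T((TX)^n)$; $\mathsf{samp}_n=\mathsf{force}^{\otimes n}\circledcirc\mathsf{copy}_n:TX\rightsquigarrow X^{\otimes n}$. $T$ is observational if for every $X$ the family $(\mathsf{samp}_n)_{n\in\mathbb{N}}$ is jointly monic in $\mathsf{Kl}(T)$. *)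

theory Defs
  imports Main
begin

text \<open>Objects of Inj are represented by the skeleton: n stands for the finite set {0..<n}.
A morphism m -> n is an injection {..<m} -> {..<n}, represented by any function
nat => nat whose restriction to {..<m} is that injection.\<close>

definition is_inj :: "nat \<Rightarrow> nat \<Rightarrow> (nat \<Rightarrow> nat) \<Rightarrow> bool" where
  "is_inj m n f \<longleftrightarrow> f ` {..<m} \<subseteq> {..<n} \<and> inj_on f {..<m}"

text \<open>Coproduct of morphisms f : a -> a' and g : b -> b' in the skeleton, giving
f + g : a + b -> a' + b' (first summand first, second summand shifted).\<close>

definition sum_inj :: "nat \<Rightarrow> nat \<Rightarrow> (nat \<Rightarrow> nat) \<Rightarrow> (nat \<Rightarrow> nat) \<Rightarrow> nat \<Rightarrow> nat" where
  "sum_inj a a' f g i = (if i < a then f i else a' + g (i - a))"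

record 'a psh =
  Ob  :: "nat \<Rightarrow> 'a set"
  Mor :: "nat \<Rightarrow> nat \<Rightarrow> (nat \<Rightarrow> nat) \<Rightarrow> 'a \<Rightarrow> 'a"

definition presheaf :: "'a psh \<Rightarrow> bool" where
  "presheaf X \<longleftrightarrow>
     (\<forall>m n f x. is_inj m n f \<and> x \<in> Ob X m \<longrightarrow> Mor X m n f x \<in> Ob X n) \<and>
     (\<forall>m n f g x. is_inj m n f \<and> (\<forall>i<m. f i = g i) \<and> x \<in> Ob X m
                    \<longrightarrow> Mor X m n f x = Mor X m n g x) \<and>
     (\<forall>m x. x \<in> Ob X m \<longrightarrow> Mor X m m id x = x) \<and>
     (\<forall>l m n f g x. is_inj l m f \<and> is_inj m n g \<and> x \<in> Ob X l
                    \<longrightarrow> Mor X l n (g \<circ> f) x = Mor X m n g (Mor X l m f x))"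

definition nat_trans :: "'a psh \<Rightarrow> 'b psh \<Rightarrow> (nat \<Rightarrow> 'a \<Rightarrow> 'b) \<Rightarrow> bool" where
  "nat_trans X Y \<alpha> \<longleftrightarrow>
     (\<forall>n x. x \<in> Ob X n \<longrightarrow> \<alpha> n x \<in> Ob Y n) \<and>
     (\<forall>m n f x. is_inj m n f \<and> x \<in> Ob X m \<longrightarrow> \<alpha> n (Mor X m n f x) = Mor Y m n f (\<alpha> m x))"

definition nt_eq :: "'a psh \<Rightarrow> (nat \<Rightarrow> 'a \<Rightarrow> 'b) \<Rightarrow> (nat \<Rightarrow> 'a \<Rightarrow> 'b) \<Rightarrow> bool" where
  "nt_eq X \<alpha> \<beta> \<longleftrightarrow> (\<forall>n x. x \<in> Ob X n \<longrightarrow> \<alpha> n x = \<beta> n x)"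

definition prodps :: "'a psh \<Rightarrow> 'b psh \<Rightarrow> ('a \<times> 'b) psh" where
  "prodps X Y = \<lparr>Ob = (\<lambda>n. Ob X n \<times> Ob Y n),
                 Mor = (\<lambda>m n f p. (Mor X m n f (fst p), Mor Y m n f (snd p)))\<rparr>"

definition powps :: "'a psh \<Rightarrow> nat \<Rightarrow> 'a list psh" where
  "powps X k = \<lparr>Ob = (\<lambda>n. {xs. length xs = k \<and> set xs \<subseteq> Ob X n}),
                Mor = (\<lambda>m n f xs. map (Mor X m n f) xs)\<rparr>"

text \<open>(TX)(a) = colim_{b in Inj} X(a+b): the quotient of the set of pairs (b, x) with
x in X(a+b) by the equivalence relation generated by (b, x) ~ (b', X(1_a + g) x)
for injections g : b -> b'.\<close>

definition colim_step :: "'a psh \<Rightarrow> nat \<Rightarrow> nat \<times> 'a \<Rightarrow> nat \<times> 'a \<Rightarrow> bool" where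
  "colim_step X a p q \<longleftrightarrow>
     (\<exists>b b' g x. p = (b, x) \<and> x \<in> Ob X (a + b) \<and> is_inj b b' g \<and>
                 q = (b', Mor X (a + b) (a + b') (sum_inj a a id g) x))"

definition colim_eq :: "'a psh \<Rightarrow> nat \<Rightarrow> nat \<times> 'a \<Rightarrow> nat \<times> 'a \<Rightarrow> bool" where
  "colim_eq X a = (sup (colim_step X a) (colim_step X a)\<inverse>\<inverse>)\<^sup>*\<^sup>*"

definition cls :: "'a psh \<Rightarrow> nat \<Rightarrow> nat \<times> 'a \<Rightarrow> (nat \<times> 'a) set" where
  "cls X a p = {q. colim_eq X a p q}"

definition rep :: "(nat \<times> 'a) set \<Rightarrow> nat \<times> 'a" where
  "rep C = (SOME p. p \<in> C)"

definition TOb :: "'a psh \<Rightarrow> nat \<Rightarrow> (nat \<times> 'a) set set" where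
  "TOb X a = {cls X a (b, x) | b x. x \<in> Ob X (a + b)}"

definition TMor :: "'a psh \<Rightarrow> nat \<Rightarrow> nat \<Rightarrow> (nat \<Rightarrow> nat) \<Rightarrow> (nat \<times> 'a) set \<Rightarrow> (nat \<times> 'a) set" where
  "TMor X a a' f C = (case rep C of (b, x) \<Rightarrow> cls X a' (b, Mor X (a + b) (a' + b) (sum_inj a a' f id) x))"

definition Tps :: "'a psh \<Rightarrow> (nat \<times> 'a) set psh" where
  "Tps X = \<lparr>Ob = TOb X, Mor = TMor X\<rparr>"

definition Tnt :: "'b psh \<Rightarrow> (nat \<Rightarrow> 'a \<Rightarrow> 'b) \<Rightarrow> nat \<Rightarrow> (nat \<times> 'a) set \<Rightarrow> (nat \<times> 'b) set" where
  "Tnt Y \<alpha> a C = (case rep C of (b, x) \<Rightarrow> cls Y a (b, \<alpha> (a + b) x))"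

definition etaT :: "'a psh \<Rightarrow> nat \<Rightarrow> 'a \<Rightarrow> (nat \<times> 'a) set" where
  "etaT X a x = cls X a (0, x)"

text \<open>Multiplication: induced by (a+b)+b' = a+(b+b').\<close>
definition muT :: "'a psh \<Rightarrow> nat \<Rightarrow> (nat \<times> (nat \<times> 'a) set) set \<Rightarrow> (nat \<times> 'a) set" where
  "muT X a C = (case rep C of (b, D) \<Rightarrow> (case rep D of (b', x) \<Rightarrow> cls X a (b + b', x)))"

text \<open>Canonical strength A x TB -> T(A x B) and costrength TA x B -> T(A x B);
the inclusion a -> a + b is the identity on {..<a}.\<close>
definition strength :: "'a psh \<Rightarrow> 'b psh \<Rightarrow> nat \<Rightarrow> 'a \<times> (nat \<times> 'b) set \<Rightarrow> (nat \<times> ('a \<times> 'b)) set" where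
  "strength A B a p = (case p of (x, C) \<Rightarrow> (case rep C of (b, y) \<Rightarrow>
      cls (prodps A B) a (b, (Mor A a (a + b) id x, y))))"

definition costrength :: "'a psh \<Rightarrow> 'b psh \<Rightarrow> nat \<Rightarrow> (nat \<times> 'a) set \<times> 'b \<Rightarrow> (nat \<times> ('a \<times> 'b)) set" where
  "costrength A B a p = (case p of (C, y) \<Rightarrow> (case rep C of (b, x) \<Rightarrow>
      cls (prodps A B) a (b, (x, Mor B a (a + b) id y))))"

definition nabla :: "'a psh \<Rightarrow> 'b psh \<Rightarrow> nat \<Rightarrow> (nat \<times> 'a) set \<times> (nat \<times> 'b) set \<Rightarrow> (nat \<times> ('a \<times> 'b)) set" where
  "nabla A B a p = muT (prodps A B) a
      (Tnt (Tps (prodps A B)) (costrength A B) a (strength (Tps A) B a p))"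

definition kcomp :: "'c psh \<Rightarrow> (nat \<Rightarrow> 'b \<Rightarrow> (nat \<times> 'c) set) \<Rightarrow> (nat \<Rightarrow> 'a \<Rightarrow> (nat \<times> 'b) set)
                       \<Rightarrow> nat \<Rightarrow> 'a \<Rightarrow> (nat \<times> 'c) set" where
  "kcomp Z g f a x = muT Z a (Tnt (Tps Z) g a (f a x))"

text \<open>(force^{\<otimes>n})^# : (TX)^n -> T(X^n), where force^{\<otimes>(k+1)} = force \<otimes> force^{\<otimes>k},
force^{\<otimes>0} = identity on the unit, and X \<times> X^k is identified with X^(k+1) via Cons.
Since force^# = 1, (f \<otimes> g)^# = nabla o (f^# \<times> g^#) gives the recursion below.\<close>
fun force_tensor :: "'a psh \<Rightarrow> nat \<Rightarrow> (nat \<times> 'a) set list \<Rightarrow> (nat \<times> 'a list) set" where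
  "force_tensor X a [] = etaT (powps X 0) a []"
| "force_tensor X a (C # Cs) =
     Tnt (powps X (Suc (length Cs))) (\<lambda>_ p. fst p # snd p) a
       (nabla X (powps X (length Cs)) a (C, force_tensor X a Cs))"

definition copy_sharp :: "'a psh \<Rightarrow> nat \<Rightarrow> nat \<Rightarrow> (nat \<times> 'a) set \<Rightarrow> (nat \<times> (nat \<times> 'a) set list) set" where
  "copy_sharp X n a C = etaT (powps (Tps X) n) a (replicate n C)"

definition samp_sharp :: "'a psh \<Rightarrow> nat \<Rightarrow> nat \<Rightarrow> (nat \<times> 'a) set \<Rightarrow> (nat \<times> 'a list) set" where
  "samp_sharp X n = kcomp (powps X n) (force_tensor X) (copy_sharp X n)"

text \<open>The family (samp_n)_n is jointly monic in Kl(T) with respect to test objects A: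
for Kleisli morphisms f, g : A ~> TX (i.e. natural transformations A -> T(TX)),
samp_n o f = samp_n o g for all n implies f = g.\<close>
definition samp_jointly_monic_wrt :: "'a psh \<Rightarrow> 'b psh \<Rightarrow> bool" where
  "samp_jointly_monic_wrt X A \<longleftrightarrow>
     (\<forall>f g. nat_trans A (Tps (Tps X)) f \<and> nat_trans A (Tps (Tps X)) g \<and>
        (\<forall>n. nt_eq A (kcomp (powps X n) (samp_sharp X n) f) (kcomp (powps X n) (samp_sharp X n) g))
        \<longrightarrow> nt_eq A f g)"

end

theory Submission
  imports Defs
begin

lemma is_injI: "(\<And>i. i<m \<Longrightarrow> f i < n) \<Longrightarrow> (\<And>i j. i<m \<Longrightarrow> j<m \<Longrightarrow> f i = f j \<Longrightarrow> i = j) \<Longrightarrow> is_inj m n f"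
  by (auto simp: is_inj_def inj_on_def)

lemma is_inj_lt: "is_inj m n f \<Longrightarrow> i < m \<Longrightarrow> f i < n" by (auto simp: is_inj_def)
lemma is_inj_inj: "is_inj m n f \<Longrightarrow> i < m \<Longrightarrow> j < m \<Longrightarrow> f i = f j \<Longrightarrow> i = j"
  by (auto simp: is_inj_def inj_on_def)

lemma is_inj_id: "m \<le> n \<Longrightarrow> is_inj m n id"
  by (rule is_injI) auto
lemma is_inj_id'[simp]: "is_inj m (m+k) id" "is_inj m m id"
  by (auto intro: is_inj_id)
lemma is_inj_comp: "is_inj l m f \<Longrightarrow> is_inj m n g \<Longrightarrow> is_inj l n (g \<circ> f)"
  by (rule is_injI) (auto dest: is_inj_lt is_inj_inj)
lemma is_inj_cong: "is_inj m n f \<Longrightarrow> (\<And>i. i<m \<Longrightarrow> f i = g i) \<Longrightarrow> is_inj m n g"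
  by (rule is_injI) (metis is_inj_lt is_inj_inj)+
lemma is_inj_mono: "is_inj m n f \<Longrightarrow> m' \<le> m \<Longrightarrow> is_inj m' n f"
  by (rule is_injI) (meson is_inj_lt is_inj_inj less_le_trans)+
lemma is_inj_sum: "is_inj a a' f \<Longrightarrow> is_inj b b' g \<Longrightarrow> is_inj (a+b) (a'+b') (sum_inj a a' f g)"
proof (rule is_injI)
  fix i assume "is_inj a a' f" "is_inj b b' g" "i < a+b"
  then show "sum_inj a a' f g i < a' + b'"
    by (cases "i < a") (auto simp: sum_inj_def dest: is_inj_lt[of b b' g "i-a"] is_inj_lt[of a a' f i])
next
  fix i j assume f: "is_inj a a' f" and g: "is_inj b b' g" and "i < a+b" "j < a+b"
    and e: "sum_inj a a' f g i = sum_inj a a' f g j"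
  show "i = j"
  proof (cases "i < a"; cases "j < a")
    assume "i < a" "j < a" then show ?thesis using e f by (auto simp: sum_inj_def dest: is_inj_inj)
  next
    assume "i < a" "\<not> j < a" then show ?thesis using e f by (auto simp: sum_inj_def dest: is_inj_lt)
  next
    assume "\<not> i < a" "j < a" then show ?thesis using e f by (auto simp: sum_inj_def dest: is_inj_lt)
  next
    assume "\<not> i < a" "\<not> j < a" then show ?thesis using e g \<open>i<a+b\<close> \<open>j<a+b\<close>
      by (auto simp: sum_inj_def dest!: is_inj_inj[of b b' g "i-a" "j-a"])
  qed
qed

lemma is_inj_sum_id[simp]: "is_inj b b' g \<Longrightarrow> is_inj (a+b) (a+b') (sum_inj a a id g)"
  using is_inj_sum[of a a id b b' g] by simp

lemma ps_Ob: "presheaf X \<Longrightarrow> is_inj m n f \<Longrightarrow> x \<in> Ob X m \<Longrightarrow> Mor X m n f x \<in> Ob X n"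
  unfolding presheaf_def by blast
lemma ps_cong: "presheaf X \<Longrightarrow> is_inj m n f \<Longrightarrow> (\<And>i. i<m \<Longrightarrow> f i = g i) \<Longrightarrow> x \<in> Ob X m \<Longrightarrow> Mor X m n f x = Mor X m n g x"
  unfolding presheaf_def by blast
lemma ps_comp: "presheaf X \<Longrightarrow> is_inj l m f \<Longrightarrow> is_inj m n g \<Longrightarrow> x \<in> Ob X l \<Longrightarrow> (\<And>i. i<l \<Longrightarrow> g (f i) = k i)
   \<Longrightarrow> Mor X m n g (Mor X l m f x) = Mor X l n k x"
proof -
  assume X: "presheaf X" and f: "is_inj l m f" and g: "is_inj m n g" and x: "x \<in> Ob X l"
    and k: "\<And>i. i<l \<Longrightarrow> g (f i) = k i"
  have "Mor X l n (g \<circ> f) x = Mor X m n g (Mor X l m f x)" using X f g x unfolding presheaf_def by blast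
  moreover have "Mor X l n (g \<circ> f) x = Mor X l n k x"
    using ps_cong[OF X is_inj_comp[OF f g] _ x] k by simp
  ultimately show ?thesis by simp
qed

lemma sum_inj_id_comp: "sum_inj a a id p (sum_inj a a id h i) = sum_inj a a id (p \<circ> h) i"
  by (simp add: sum_inj_def)

lemma colim_eq_refl[simp]: "colim_eq X a p p"
  by (simp add: colim_eq_def)
lemma colim_eq_sym: "colim_eq X a p q \<Longrightarrow> colim_eq X a q p"
  unfolding colim_eq_def
proof (induction rule: rtranclp_induct)
  case base then show ?case by simp
next
  case (step y z)
  then have "(sup (colim_step X a) (colim_step X a)\<inverse>\<inverse>) z y" by auto
  then show ?case using step.IH by (rule converse_rtranclp_into_rtranclp)
qed
lemma colim_eq_trans: "colim_eq X a p q \<Longrightarrow> colim_eq X a q r \<Longrightarrow> colim_eq X a p r"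
  unfolding colim_eq_def by (rule rtranclp_trans)
lemma colim_eq_step: "colim_step X a p q \<Longrightarrow> colim_eq X a p q"
  unfolding colim_eq_def by auto

lemma cls_eq_iff: "cls X a p = cls X a q \<longleftrightarrow> colim_eq X a p q"
proof
  assume "cls X a p = cls X a q"
  then have "q \<in> cls X a p" by (simp add: cls_def)
  then show "colim_eq X a p q" by (simp add: cls_def)
next
  assume "colim_eq X a p q"
  then show "cls X a p = cls X a q"
    unfolding cls_def by (auto intro: colim_eq_trans colim_eq_sym)
qed

lemma rep_cls: "colim_eq X a p (rep (cls X a p))"
proof -
  have "p \<in> cls X a p" by (simp add: cls_def)
  then have "rep (cls X a p) \<in> cls X a p" unfolding rep_def by (rule someI)
  then show ?thesis by (simp add: cls_def)
qed

lemma colim_eq_inv: "colim_eq X a p q \<Longrightarrow> (\<And>p q. colim_step X a p q \<Longrightarrow> \<phi> p = \<phi> q) \<Longrightarrow> \<phi> p = \<phi> q"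
  unfolding colim_eq_def
proof (induction rule: rtranclp_induct)
  case base then show ?case by simp
next
  case (step y z)
  then show ?case by (metis conversep_iff sup2E)
qed

lemma rep_inv: "(\<And>p q. colim_step X a p q \<Longrightarrow> \<phi> p = \<phi> q) \<Longrightarrow> \<phi> (rep (cls X a p)) = \<phi> p"
  using colim_eq_inv[OF rep_cls] by metis

lemma step_cls: "x \<in> Ob X (a+b) \<Longrightarrow> is_inj b b' g \<Longrightarrow> cls X a (b,x) = cls X a (b', Mor X (a+b) (a+b') (sum_inj a a id g) x)"
  unfolding cls_eq_iff by (rule colim_eq_step) (auto simp: colim_step_def)

lemma Ob_Tps[simp]: "Ob (Tps X) = TOb X" and Mor_Tps[simp]: "Mor (Tps X) = TMor X"
  by (simp_all add: Tps_def)
lemma Ob_prodps[simp]: "Ob (prodps A B) n = Ob A n \<times> Ob B n"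
  and Mor_prodps[simp]: "Mor (prodps A B) m n f p = (Mor A m n f (fst p), Mor B m n f (snd p))"
  by (simp_all add: prodps_def)
lemma Ob_powps[simp]: "Ob (powps X k) n = {xs. length xs = k \<and> set xs \<subseteq> Ob X n}"
  and Mor_powps[simp]: "Mor (powps X k) m n f xs = map (Mor X m n f) xs"
  by (simp_all add: powps_def)

lemma TOb_cls[simp]: "x \<in> Ob X (a+b) \<Longrightarrow> cls X a (b,x) \<in> TOb X a"
  by (auto simp: TOb_def)
lemma TOb_E: "C \<in> TOb X a \<Longrightarrow> (\<And>b x. C = cls X a (b,x) \<Longrightarrow> x \<in> Ob X (a+b) \<Longrightarrow> P) \<Longrightarrow> P"
  by (auto simp: TOb_def)

lemma presheaf_prodps: "presheaf A \<Longrightarrow> presheaf B \<Longrightarrow> presheaf (prodps A B)"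
  unfolding presheaf_def by (auto simp: prodps_def)
lemma presheaf_powps: "presheaf X \<Longrightarrow> presheaf (powps X k)"
proof -
  assume X: "presheaf X"
  show ?thesis unfolding presheaf_def
  proof (intro conjI allI impI)
    fix m n f xs assume "is_inj m n f \<and> xs \<in> Ob (powps X k) m"
    then show "Mor (powps X k) m n f xs \<in> Ob (powps X k) n" using ps_Ob[OF X] by auto
  next
    fix m n f g xs assume "is_inj m n f \<and> (\<forall>i<m. f i = g i) \<and> xs \<in> Ob (powps X k) m"
    then show "Mor (powps X k) m n f xs = Mor (powps X k) m n g xs" using ps_cong[OF X] by auto
  next
    fix m xs assume "xs \<in> Ob (powps X k) m"
    then show "Mor (powps X k) m m id xs = xs" using X unfolding presheaf_def by (auto intro!: map_idI)
  next
    fix l m n f g xs assume "is_inj l m f \<and> is_inj m n g \<and> xs \<in> Ob (powps X k) l"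
    then show "Mor (powps X k) l n (g \<circ> f) xs = Mor (powps X k) m n g (Mor (powps X k) l m f xs)"
      using X unfolding presheaf_def by auto
  qed
qed



lemma TMor_cls:
  assumes X: "presheaf X" and f: "is_inj a a' f"
  shows "TMor X a a' f (cls X a (b,x)) = cls X a' (b, Mor X (a+b) (a'+b) (sum_inj a a' f id) x)"
proof -
  let ?\<phi> = "\<lambda>(b,x). cls X a' (b, Mor X (a+b) (a'+b) (sum_inj a a' f id) x)"
  have "?\<phi> p = ?\<phi> q" if "colim_step X a p q" for p q
  proof -
    from that obtain b1 b2 g x1 where p: "p = (b1,x1)" and x1: "x1 \<in> Ob X (a+b1)" and g: "is_inj b1 b2 g"
      and q: "q = (b2, Mor X (a+b1) (a+b2) (sum_inj a a id g) x1)" unfolding colim_step_def by blast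
    have F1: "is_inj (a+b1) (a'+b1) (sum_inj a a' f id)" using is_inj_sum[OF f is_inj_id'(2)] .
    have F2: "is_inj (a+b2) (a'+b2) (sum_inj a a' f id)" using is_inj_sum[OF f is_inj_id'(2)] .
    have fl: "\<And>i. i<a \<Longrightarrow> f i < a'" using f is_inj_lt by blast
    have "?\<phi> p = cls X a' (b2, Mor X (a'+b1) (a'+b2) (sum_inj a' a' id g) (Mor X (a+b1) (a'+b1) (sum_inj a a' f id) x1))"
      unfolding p using step_cls[OF ps_Ob[OF X F1 x1] g] by simp
    also have "Mor X (a'+b1) (a'+b2) (sum_inj a' a' id g) (Mor X (a+b1) (a'+b1) (sum_inj a a' f id) x1)
       = Mor X (a+b1) (a'+b2) (\<lambda>i. if i < a then f i else a' + g (i-a)) x1"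
      by (rule ps_comp[OF X F1 is_inj_sum_id[OF g] x1]) (auto simp: sum_inj_def fl)
    also have "... = Mor X (a+b2) (a'+b2) (sum_inj a a' f id) (Mor X (a+b1) (a+b2) (sum_inj a a id g) x1)"
      by (rule ps_comp[OF X is_inj_sum_id[OF g] F2 x1, symmetric]) (simp add: sum_inj_def)
    finally show ?thesis using p q by (simp add: id_def)
  qed
  then have "?\<phi> (rep (cls X a (b,x))) = ?\<phi> (b,x)" by (rule rep_inv)
  then show ?thesis unfolding TMor_def by (simp add: case_prod_beta)
qed

lemma TMor_TOb:
  assumes X: "presheaf X" and f: "is_inj a a' f" and C: "C \<in> TOb X a"
  shows "TMor X a a' f C \<in> TOb X a'"
  using C
proof (rule TOb_E)
  fix b x assume C: "C = cls X a (b,x)" and x: "x \<in> Ob X (a+b)"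
  show ?thesis unfolding C TMor_cls[OF X f]
    by (rule TOb_cls, rule ps_Ob[OF X is_inj_sum[OF f is_inj_id'(2)] x])
qed

lemma TMor_comp:
  assumes X: "presheaf X" and C: "C \<in> TOb X a1" and f: "is_inj a1 a2 f" and g: "is_inj a2 a3 g"
    and k: "\<And>i. i<a1 \<Longrightarrow> g (f i) = k i"
  shows "TMor X a2 a3 g (TMor X a1 a2 f C) = TMor X a1 a3 k C"
  using C
proof (rule TOb_E)
  fix b x assume C: "C = cls X a1 (b,x)" and x: "x \<in> Ob X (a1+b)"
  have kk: "is_inj a1 a3 k" using is_inj_cong[OF is_inj_comp[OF f g]] k by simp
  have fl: "\<And>i. i<a1 \<Longrightarrow> f i < a2" using f is_inj_lt by blast
  show ?thesis unfolding C TMor_cls[OF X f] TMor_cls[OF X g] TMor_cls[OF X kk]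
    by (subst ps_comp[OF X is_inj_sum[OF f is_inj_id'(2)] is_inj_sum[OF g is_inj_id'(2)] x])
      (auto simp: sum_inj_def fl k)
qed

lemma Tnt_cls:
  assumes resp: "\<And>b b' g x. x \<in> Ob X (a+b) \<Longrightarrow> is_inj b b' g \<Longrightarrow>
     cls Y a (b, \<alpha> (a+b) x) = cls Y a (b', \<alpha> (a+b') (Mor X (a+b) (a+b') (sum_inj a a id g) x))"
  shows "Tnt Y \<alpha> a (cls X a (b,x)) = cls Y a (b, \<alpha> (a+b) x)"
proof -
  let ?\<phi> = "\<lambda>(b,x). cls Y a (b, \<alpha> (a+b) x)"
  have "?\<phi> p = ?\<phi> q" if "colim_step X a p q" for p q
    using that resp unfolding colim_step_def by auto
  then have "?\<phi> (rep (cls X a (b,x))) = ?\<phi> (b,x)" by (rule rep_inv)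
  then show ?thesis unfolding Tnt_def by (simp add: case_prod_beta)
qed

lemma muT_inner:
  assumes X: "presheaf X"
  shows "(case rep (cls X (a+b) (c,x)) of (c',x') \<Rightarrow> cls X a (b+c', x')) = cls X a (b+c, x)"
proof -
  let ?\<phi> = "\<lambda>(c',x'). cls X a (b+c', x')"
  have "?\<phi> p = ?\<phi> q" if "colim_step X (a+b) p q" for p q
  proof -
    from that obtain c1 c2 h x1 where p: "p = (c1,x1)" and x1: "x1 \<in> Ob X (a+b+c1)" and h: "is_inj c1 c2 h"
      and q: "q = (c2, Mor X (a+b+c1) (a+b+c2) (sum_inj (a+b) (a+b) id h) x1)" unfolding colim_step_def by blast
    have x1': "x1 \<in> Ob X (a+(b+c1))" using x1 by (simp add: add.assoc)
    have e: "\<And>i. i < a+(b+c1) \<Longrightarrow> sum_inj a a id (sum_inj b b id h) i = sum_inj (a+b) (a+b) id h i"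
      by (auto simp: sum_inj_def)
    have H: "is_inj (b+c1) (b+c2) (sum_inj b b id h)" using is_inj_sum_id[OF h] .
    have "cls X a (b+c1, x1) = cls X a (b+c2, Mor X (a+(b+c1)) (a+(b+c2)) (sum_inj a a id (sum_inj b b id h)) x1)"
      by (rule step_cls[OF x1' H])
    also have "Mor X (a+(b+c1)) (a+(b+c2)) (sum_inj a a id (sum_inj b b id h)) x1 = Mor X (a+b+c1) (a+b+c2) (sum_inj (a+b) (a+b) id h) x1"
      using ps_cong[OF X is_inj_sum_id[OF H] e x1']
      by (simp add: add.assoc)
    finally show ?thesis unfolding p q by simp
  qed
  then have "?\<phi> (rep (cls X (a+b) (c,x))) = ?\<phi> (c,x)" by (rule rep_inv)
  then show ?thesis by (simp add: case_prod_beta)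
qed

lemma muT_cls:
  assumes X: "presheaf X"
  shows "muT X a (cls (Tps X) a (b, cls X (a+b) (c,x))) = cls X a (b+c, x)"
proof -
  let ?\<phi> = "\<lambda>(b,D). case rep D of (c',x') \<Rightarrow> cls X a (b+c', x')"
  have "?\<phi> p = ?\<phi> q" if "colim_step (Tps X) a p q" for p q
  proof -
    from that obtain b1 b2 g D1 where p: "p = (b1,D1)" and D1: "D1 \<in> TOb X (a+b1)" and g: "is_inj b1 b2 g"
      and q: "q = (b2, TMor X (a+b1) (a+b2) (sum_inj a a id g) D1)" unfolding colim_step_def by auto
    from D1 obtain c x1 where D1e: "D1 = cls X (a+b1) (c,x1)" and x1: "x1 \<in> Ob X (a+b1+c)" by (rule TOb_E)
    have x1': "x1 \<in> Ob X (a+(b1+c))" using x1 by (simp add: add.assoc)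
    have e: "\<And>i. i < a+(b1+c) \<Longrightarrow> sum_inj a a id (sum_inj b1 b2 g id) i = sum_inj (a+b1) (a+b2) (sum_inj a a id g) id i"
      by (auto simp: sum_inj_def)
    have G: "is_inj (b1+c) (b2+c) (sum_inj b1 b2 g id)" using is_inj_sum[OF g is_inj_id'(2)] .
    have "?\<phi> p = cls X a (b1+c, x1)" unfolding p D1e using muT_inner[OF X] by simp
    also have "... = cls X a (b2+c, Mor X (a+(b1+c)) (a+(b2+c)) (sum_inj a a id (sum_inj b1 b2 g id)) x1)"
      by (rule step_cls[OF x1' G])
    also have "Mor X (a+(b1+c)) (a+(b2+c)) (sum_inj a a id (sum_inj b1 b2 g id)) x1
       = Mor X (a+b1+c) (a+b2+c) (sum_inj (a+b1) (a+b2) (sum_inj a a id g) id) x1"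
      using ps_cong[OF X is_inj_sum_id[OF G] e x1']
      by (simp add: add.assoc)
    also have "cls X a (b2+c, Mor X (a+b1+c) (a+b2+c) (sum_inj (a+b1) (a+b2) (sum_inj a a id g) id) x1) = ?\<phi> q"
      unfolding q D1e TMor_cls[OF X is_inj_sum_id[OF g]] using muT_inner[OF X] by simp
    finally show ?thesis .
  qed
  then have "?\<phi> (rep (cls (Tps X) a (b, cls X (a+b) (c,x)))) = ?\<phi> (b, cls X (a+b) (c,x))" by (rule rep_inv)
  then show ?thesis unfolding muT_def using muT_inner[OF X] by (simp add: case_prod_beta)
qed

lemma strength_cls:
  assumes A: "presheaf A" and C: "C \<in> TOb A a"
  shows "strength (Tps A) B a (C, cls B a (m,y)) = cls (prodps (Tps A) B) a (m, (TMor A a (a+m) id C, y))"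
proof -
  let ?\<phi> = "\<lambda>(m,y). cls (prodps (Tps A) B) a (m, (TMor A a (a+m) id C, y))"
  have "?\<phi> p = ?\<phi> q" if "colim_step B a p q" for p q
  proof -
    from that obtain m1 m2 g y1 where p: "p = (m1,y1)" and y1: "y1 \<in> Ob B (a+m1)" and g: "is_inj m1 m2 g"
      and q: "q = (m2, Mor B (a+m1) (a+m2) (sum_inj a a id g) y1)" unfolding colim_step_def by auto
    have v: "(TMor A a (a+m1) id C, y1) \<in> Ob (prodps (Tps A) B) (a+m1)"
      using TMor_TOb[OF A _ C] y1 by simp
    show ?thesis unfolding p q using step_cls[OF v g]
      by (simp add: TMor_comp[OF A C is_inj_id'(1) is_inj_sum_id[OF g], of id] sum_inj_def)
  qed
  then have "?\<phi> (rep (cls B a (m,y))) = ?\<phi> (m,y)" by (rule rep_inv)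
  then show ?thesis unfolding strength_def by (simp add: case_prod_beta)
qed

lemma costrength_cls:
  assumes B: "presheaf B" and y: "y \<in> Ob B a"
  shows "costrength A B a (cls A a (b,x), y) = cls (prodps A B) a (b, (x, Mor B a (a+b) id y))"
proof -
  let ?\<phi> = "\<lambda>(b,x). cls (prodps A B) a (b, (x, Mor B a (a+b) id y))"
  have "?\<phi> p = ?\<phi> q" if "colim_step A a p q" for p q
  proof -
    from that obtain b1 b2 g x1 where p: "p = (b1,x1)" and x1: "x1 \<in> Ob A (a+b1)" and g: "is_inj b1 b2 g"
      and q: "q = (b2, Mor A (a+b1) (a+b2) (sum_inj a a id g) x1)" unfolding colim_step_def by auto
    have v: "(x1, Mor B a (a+b1) id y) \<in> Ob (prodps A B) (a+b1)"
      using ps_Ob[OF B is_inj_id'(1) y] x1 by simp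
    show ?thesis unfolding p q using step_cls[OF v g]
      by (simp add: ps_comp[OF B is_inj_id'(1) is_inj_sum_id[OF g] y, of id] sum_inj_def)
  qed
  then have "?\<phi> (rep (cls A a (b,x))) = ?\<phi> (b,x)" by (rule rep_inv)
  then show ?thesis unfolding costrength_def by (simp add: case_prod_beta)
qed



lemma nabla_cls:
  assumes A: "presheaf A" and B: "presheaf B" and x: "x \<in> Ob A (a+b)" and y: "y \<in> Ob B (a+m)"
  shows "nabla A B a (cls A a (b,x), cls B a (m,y)) = cls (prodps A B) a (m+b,
     (Mor A (a+b) (a+m+b) (sum_inj a (a+m) id id) x, Mor B (a+m) (a+m+b) id y))"
proof -
  let ?P = "prodps A B"
  have P: "presheaf ?P" using presheaf_prodps[OF A B] .
  have resp: "cls (Tps ?P) a (m1, costrength A B (a+m1) Cy) = cls (Tps ?P) a (m2, costrength A B (a+m2) (Mor (prodps (Tps A) B) (a+m1) (a+m2) (sum_inj a a id g) Cy))"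
    if v: "Cy \<in> Ob (prodps (Tps A) B) (a+m1)" and g: "is_inj m1 m2 g" for m1 m2 g Cy
  proof -
    obtain C y' where Cy: "Cy = (C, y')" by (cases Cy)
    with v have C: "C \<in> TOb A (a+m1)" and y': "y' \<in> Ob B (a+m1)" by auto
    from C obtain b0 x0 where Ce: "C = cls A (a+m1) (b0,x0)" and x0: "x0 \<in> Ob A (a+m1+b0)" by (rule TOb_E)
    let ?G = "sum_inj a a id g"
    have G: "is_inj (a+m1) (a+m2) ?G" using g by simp
    have G': "is_inj (a+m1+b0) (a+m2+b0) (sum_inj (a+m1) (a+m2) ?G id)" using is_inj_sum[OF G is_inj_id'(2)] .
    have yv: "Mor B (a+m1) (a+m1+b0) id y' \<in> Ob B (a+m1+b0)" using ps_Ob[OF B is_inj_id'(1) y'] .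
    have Dv: "(x0, Mor B (a+m1) (a+m1+b0) id y') \<in> Ob ?P (a+m1+b0)" using x0 yv by simp
    have e1: "costrength A B (a+m1) Cy = cls ?P (a+m1) (b0, (x0, Mor B (a+m1) (a+m1+b0) id y'))"
      unfolding Cy Ce costrength_cls[OF B y'] ..
    have e2: "cls (Tps ?P) a (m1, cls ?P (a+m1) (b0, (x0, Mor B (a+m1) (a+m1+b0) id y')))
       = cls (Tps ?P) a (m2, TMor ?P (a+m1) (a+m2) ?G (cls ?P (a+m1) (b0, (x0, Mor B (a+m1) (a+m1+b0) id y'))))"
      using step_cls[of _ "Tps ?P" a m1 m2 g] TOb_cls[OF Dv] g by simp
    have e3: "TMor ?P (a+m1) (a+m2) ?G (cls ?P (a+m1) (b0, (x0, Mor B (a+m1) (a+m1+b0) id y')))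
      = cls ?P (a+m2) (b0, (Mor A (a+m1+b0) (a+m2+b0) (sum_inj (a+m1) (a+m2) ?G id) x0,
           Mor B (a+m1+b0) (a+m2+b0) (sum_inj (a+m1) (a+m2) ?G id) (Mor B (a+m1) (a+m1+b0) id y')))"
      using TMor_cls[OF P G] by simp
    have e4: "Mor B (a+m1+b0) (a+m2+b0) (sum_inj (a+m1) (a+m2) ?G id) (Mor B (a+m1) (a+m1+b0) id y')
       = Mor B (a+m2) (a+m2+b0) id (Mor B (a+m1) (a+m2) ?G y')"
    proof -
      have "Mor B (a+m1+b0) (a+m2+b0) (sum_inj (a+m1) (a+m2) ?G id) (Mor B (a+m1) (a+m1+b0) id y') = Mor B (a+m1) (a+m2+b0) ?G y'"
        by (rule ps_comp[OF B is_inj_id'(1) G' y']) (simp add: sum_inj_def)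
      also have "... = Mor B (a+m2) (a+m2+b0) id (Mor B (a+m1) (a+m2) ?G y')"
        by (rule ps_comp[OF B G is_inj_id'(1) y', symmetric]) simp
      finally show ?thesis .
    qed
    have e5: "costrength A B (a+m2) (Mor (prodps (Tps A) B) (a+m1) (a+m2) ?G Cy)
      = cls ?P (a+m2) (b0, (Mor A (a+m1+b0) (a+m2+b0) (sum_inj (a+m1) (a+m2) ?G id) x0,
           Mor B (a+m2) (a+m2+b0) id (Mor B (a+m1) (a+m2) ?G y')))"
      unfolding Cy Ce by (simp add: TMor_cls[OF A G] costrength_cls[OF B ps_Ob[OF B G y']])
    show ?thesis by (simp only: e1 e2 e3 e4 e5)
  qed
  have x1: "TMor A a (a+m) id (cls A a (b,x)) = cls A (a+m) (b, Mor A (a+b) (a+m+b) (sum_inj a (a+m) id id) x)"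
    using TMor_cls[OF A is_inj_id'(1)] .
  have t: "Tnt (Tps ?P) (costrength A B) a (cls (prodps (Tps A) B) a (m, (cls A (a+m) (b, Mor A (a+b) (a+m+b) (sum_inj a (a+m) id id) x), y)))
     = cls (Tps ?P) a (m, costrength A B (a+m) (cls A (a+m) (b, Mor A (a+b) (a+m+b) (sum_inj a (a+m) id id) x), y))"
    by (rule Tnt_cls) (rule resp)
  show ?thesis
    unfolding nabla_def strength_cls[OF A TOb_cls[OF x]] x1 t
      costrength_cls[OF B y] muT_cls[OF P] ..
qed

lemma Tnt_cons:
  "Tnt (powps X (Suc k)) (\<lambda>_ p. fst p # snd p) a (cls (prodps X (powps X k)) a (M, (z, zs)))
    = cls (powps X (Suc k)) a (M, z # zs)"
proof -
  have "cls (powps X (Suc k)) a (b, (\<lambda>_ p. fst p # snd p) (a+b) v) = cls (powps X (Suc k)) a (b', (\<lambda>_ p. fst p # snd p) (a+b') (Mor (prodps X (powps X k)) (a+b) (a+b') (sum_inj a a id g) v))"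
    if v: "v \<in> Ob (prodps X (powps X k)) (a+b)" and g: "is_inj b b' g" for b b' g v
  proof -
    have "fst v # snd v \<in> Ob (powps X (Suc k)) (a+b)" using v by auto
    from step_cls[OF this g] show ?thesis by simp
  qed
  from Tnt_cls[OF this] show ?thesis by simp
qed

fun tot :: "(nat \<times> 'a) list \<Rightarrow> nat" where
  "tot [] = 0"
| "tot (p # ps) = tot ps + fst p"

fun expl :: "'a psh \<Rightarrow> nat \<Rightarrow> (nat \<times> 'a) list \<Rightarrow> 'a list" where
  "expl X a [] = []"
| "expl X a (p # ps) = Mor X (a + fst p) (a + tot ps + fst p) (sum_inj a (a + tot ps) id id) (snd p)
      # map (Mor X (a + tot ps) (a + tot ps + fst p) id) (expl X a ps)"

definition valid :: "'a psh \<Rightarrow> nat \<Rightarrow> (nat \<times> 'a) list \<Rightarrow> bool" where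
  "valid X a ps \<longleftrightarrow> (\<forall>p\<in>set ps. snd p \<in> Ob X (a + fst p))"

lemma valid_simps[simp]: "valid X a []" "valid X a (p # ps) \<longleftrightarrow> snd p \<in> Ob X (a + fst p) \<and> valid X a ps"
  by (auto simp: valid_def)

lemma tot_map[simp]: "tot (map (\<lambda>p. (fst p, h p)) ps) = tot ps"
  by (induction ps) auto

lemma is_inj_shift: "is_inj (a+c) (a+T+c) (sum_inj a (a+T) id id)"
  using is_inj_sum[of a "a+T" id c c id] by (simp add: is_inj_id)

lemma expl_Ob:
  assumes X: "presheaf X"
  shows "valid X a ps \<Longrightarrow> expl X a ps \<in> Ob (powps X (length ps)) (a + tot ps)"
proof (induction ps)
  case Nil then show ?case by simp
next
  case (Cons p ps)
  then have h: "Mor X (a + fst p) (a + tot ps + fst p) (sum_inj a (a + tot ps) id id) (snd p) \<in> Ob X (a + tot ps + fst p)"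
    using ps_Ob[OF X is_inj_shift] by simp
  have t: "set (map (Mor X (a + tot ps) (a + tot ps + fst p) id) (expl X a ps)) \<subseteq> Ob X (a + tot ps + fst p)"
    using Cons ps_Ob[OF X is_inj_id'(1)] by auto
  show ?case using h t Cons by (simp add: add.assoc)
qed

lemma force_tensor_cls:
  assumes X: "presheaf X"
  shows "valid X a ps \<Longrightarrow> force_tensor X a (map (cls X a) ps) = cls (powps X (length ps)) a (tot ps, expl X a ps)"
proof (induction ps)
  case Nil then show ?case by (simp add: etaT_def)
next
  case (Cons p ps)
  obtain c x where p: "p = (c,x)" by (cases p)
  have x: "x \<in> Ob X (a+c)" using Cons p by simp
  have y: "expl X a ps \<in> Ob (powps X (length ps)) (a + tot ps)" using expl_Ob[OF X] Cons by simp
  show ?case using Cons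
    by (simp add: p nabla_cls[OF X presheaf_powps[OF X] x y] Tnt_cons)
qed

lemma expl_nat:
  assumes X: "presheaf X" and f: "is_inj a a' f"
  shows "valid X a ps \<Longrightarrow> map (Mor X (a + tot ps) (a' + tot ps) (sum_inj a a' f id)) (expl X a ps)
     = expl X a' (map (\<lambda>p. (fst p, Mor X (a + fst p) (a' + fst p) (sum_inj a a' f id) (snd p))) ps)"
proof (induction ps)
  case Nil then show ?case by simp
next
  case (Cons p ps)
  obtain c x where p: "p = (c,x)" by (cases p)
  have x: "x \<in> Ob X (a+c)" using Cons p by simp
  let ?T = "tot ps"
  have fl: "\<And>i. i<a \<Longrightarrow> f i < a'" using f is_inj_lt by blast
  have F: "is_inj (a+?T+c) (a'+?T+c) (sum_inj a a' f id)"
    using is_inj_sum[OF f, of "?T+c" "?T+c" id] by (simp add: add.assoc)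
  have FT: "is_inj (a+?T) (a'+?T) (sum_inj a a' f id)"
    using is_inj_sum[OF f, of "?T" "?T" id] by simp
  have Fc: "is_inj (a+c) (a'+c) (sum_inj a a' f id)"
    using is_inj_sum[OF f, of c c id] by simp
  have h1: "Mor X (a+?T+c) (a'+?T+c) (sum_inj a a' f id) (Mor X (a+c) (a+?T+c) (sum_inj a (a+?T) id id) x)
     = Mor X (a+c) (a'+?T+c) (\<lambda>i. if i < a then f i else a' + ?T + (i - a)) x"
    by (rule ps_comp[OF X is_inj_shift F x]) (auto simp: sum_inj_def)
  have h2: "Mor X (a'+c) (a'+?T+c) (sum_inj a' (a'+?T) id id) (Mor X (a+c) (a'+c) (sum_inj a a' f id) x)
     = Mor X (a+c) (a'+?T+c) (\<lambda>i. if i < a then f i else a' + ?T + (i - a)) x"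
    by (rule ps_comp[OF X Fc is_inj_shift x]) (auto simp: sum_inj_def fl)
  have h3: "Mor X (a+?T+c) (a'+?T+c) (sum_inj a a' f id) (Mor X (a+?T) (a+?T+c) id y)
    = Mor X (a'+?T) (a'+?T+c) id (Mor X (a+?T) (a'+?T) (sum_inj a a' f id) y)" if y: "y \<in> Ob X (a+?T)" for y
  proof -
    have "Mor X (a+?T+c) (a'+?T+c) (sum_inj a a' f id) (Mor X (a+?T) (a+?T+c) id y) = Mor X (a+?T) (a'+?T+c) (sum_inj a a' f id) y"
      by (rule ps_comp[OF X is_inj_id'(1) F y]) simp
    also have "... = Mor X (a'+?T) (a'+?T+c) id (Mor X (a+?T) (a'+?T) (sum_inj a a' f id) y)"
      by (rule ps_comp[OF X FT is_inj_id'(1) y, symmetric]) simp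
    finally show ?thesis .
  qed
  have yset: "set (expl X a ps) \<subseteq> Ob X (a+?T)" using expl_Ob[OF X] Cons by simp
  have tl: "map (Mor X (a+?T+c) (a'+?T+c) (sum_inj a a' f id)) (map (Mor X (a+?T) (a+?T+c) id) (expl X a ps))
     = map (Mor X (a'+?T) (a'+?T+c) id) (map (Mor X (a+?T) (a'+?T) (sum_inj a a' f id)) (expl X a ps))"
    using h3 yset by auto
  have IH: "map (Mor X (a+?T) (a'+?T) (sum_inj a a' f id)) (expl X a ps)
     = expl X a' (map (\<lambda>p. (fst p, Mor X (a + fst p) (a' + fst p) (sum_inj a a' f id) (snd p))) ps)"
    using Cons by (simp add: id_def)
  have tl2: "map (Mor X (a+?T+c) (a'+?T+c) (sum_inj a a' f id)) (map (Mor X (a+?T) (a+?T+c) id) (expl X a ps))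
     = map (Mor X (a'+?T) (a'+?T+c) id) (expl X a' (map (\<lambda>p. (fst p, Mor X (a + fst p) (a' + fst p) (sum_inj a a' f id) (snd p))) ps))"
    by (simp only: tl IH)
  have lv: "a + tot (p # ps) = a + ?T + c" "a' + tot (p # ps) = a' + ?T + c" using p by simp_all
  have e1: "map (Mor X (a+?T+c) (a'+?T+c) (sum_inj a a' f id)) (expl X a (p#ps))
     = Mor X (a+?T+c) (a'+?T+c) (sum_inj a a' f id) (Mor X (a+c) (a+?T+c) (sum_inj a (a+?T) id id) x)
       # map (Mor X (a+?T+c) (a'+?T+c) (sum_inj a a' f id)) (map (Mor X (a+?T) (a+?T+c) id) (expl X a ps))"
    by (simp add: p)
  have e2: "expl X a' (map (\<lambda>p. (fst p, Mor X (a + fst p) (a' + fst p) (sum_inj a a' f id) (snd p))) (p#ps))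
     = Mor X (a'+c) (a'+?T+c) (sum_inj a' (a'+?T) id id) (Mor X (a+c) (a'+c) (sum_inj a a' f id) x)
       # map (Mor X (a'+?T) (a'+?T+c) id) (expl X a' (map (\<lambda>p. (fst p, Mor X (a + fst p) (a' + fst p) (sum_inj a a' f id) (snd p))) ps))"
    by (simp add: p)
  show ?case unfolding lv e1 e2 h1 h2 tl2 ..
qed

lemma list_TOb: "set Cs \<subseteq> TOb X a \<Longrightarrow> \<exists>ps. Cs = map (cls X a) ps \<and> valid X a ps"
proof (induction Cs)
  case Nil then show ?case by simp
next
  case (Cons C Cs)
  then obtain ps where ps: "Cs = map (cls X a) ps" "valid X a ps" by auto
  from Cons.prems obtain b x where "C = cls X a (b,x)" "x \<in> Ob X (a+b)" by (auto elim: TOb_E)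
  with ps show ?case by (intro exI[of _ "(b,x) # ps"]) simp
qed

lemma Tps_step_expl:
  assumes X: "presheaf X" and v: "valid X (a+b) ps" and g: "is_inj b b' g"
  shows "cls (Tps (powps X (length ps))) a (b, cls (powps X (length ps)) (a+b) (tot ps, expl X (a+b) ps))
    = cls (Tps (powps X (length ps))) a (b', cls (powps X (length ps)) (a+b') (tot ps,
        expl X (a+b') (map (\<lambda>p. (fst p, Mor X (a+b+fst p) (a+b'+fst p) (sum_inj (a+b) (a+b') (sum_inj a a id g) id) (snd p))) ps)))"
proof -
  let ?P = "powps X (length ps)"
  have G: "is_inj (a+b) (a+b') (sum_inj a a id g)" using g by simp
  have Ev: "expl X (a+b) ps \<in> Ob ?P (a+b+tot ps)" using expl_Ob[OF X v] .
  have "cls (Tps ?P) a (b, cls ?P (a+b) (tot ps, expl X (a+b) ps))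
     = cls (Tps ?P) a (b', TMor ?P (a+b) (a+b') (sum_inj a a id g) (cls ?P (a+b) (tot ps, expl X (a+b) ps)))"
    using step_cls[of _ "Tps ?P" a b b' g] TOb_cls[OF Ev] g by simp
  also have "TMor ?P (a+b) (a+b') (sum_inj a a id g) (cls ?P (a+b) (tot ps, expl X (a+b) ps))
    = cls ?P (a+b') (tot ps, map (Mor X (a+b+tot ps) (a+b'+tot ps) (sum_inj (a+b) (a+b') (sum_inj a a id g) id)) (expl X (a+b) ps))"
    using TMor_cls[OF presheaf_powps[OF X] G] by simp
  also have "map (Mor X (a+b+tot ps) (a+b'+tot ps) (sum_inj (a+b) (a+b') (sum_inj a a id g) id)) (expl X (a+b) ps)
     = expl X (a+b') (map (\<lambda>p. (fst p, Mor X (a+b+fst p) (a+b'+fst p) (sum_inj (a+b) (a+b') (sum_inj a a id g) id) (snd p))) ps)"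
    using expl_nat[OF X G v] .
  finally show ?thesis .
qed



lemma tot_rep[simp]: "tot (replicate n p) = n * fst p"
  by (induction n) auto

lemma F_resp:
  assumes X: "presheaf X" and Cs: "Cs \<in> Ob (powps (Tps X) n) (a+m)" and g: "is_inj m m' g"
  shows "cls (Tps (powps X n)) a (m, force_tensor X (a+m) Cs)
    = cls (Tps (powps X n)) a (m', force_tensor X (a+m') (Mor (powps (Tps X) n) (a+m) (a+m') (sum_inj a a id g) Cs))"
proof -
  from Cs have len: "length Cs = n" and sub: "set Cs \<subseteq> TOb X (a+m)" by auto
  obtain ps where ps: "Cs = map (cls X (a+m)) ps" and v: "valid X (a+m) ps" using list_TOb[OF sub] by blast
  let ?G = "sum_inj (a+m) (a+m') (sum_inj a a id g) id"
  let ?ps' = "map (\<lambda>p. (fst p, Mor X (a+m+fst p) (a+m'+fst p) ?G (snd p))) ps"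
  have G: "is_inj (a+m) (a+m') (sum_inj a a id g)" using g by simp
  have v': "valid X (a+m') ?ps'" using v ps_Ob[OF X is_inj_sum[OF G is_inj_id'(2)]] by (auto simp: valid_def)
  have pt: "TMor X (a+m) (a+m') (sum_inj a a id g) (cls X (a+m) p) = cls X (a+m') (fst p, Mor X (a+m+fst p) (a+m'+fst p) ?G (snd p))" for p
    by (cases p) (simp add: TMor_cls[OF X G])
  have mm: "map (TMor X (a+m) (a+m') (sum_inj a a id g)) Cs = map (cls X (a+m')) ?ps'"
    unfolding ps using pt by simp
  have nl: "length ps = n" using len ps by simp
  have mor: "Mor (powps (Tps X) n) (a+m) (a+m') (sum_inj a a id g) Cs = map (cls X (a+m')) ?ps'"
    using mm by simp
  show ?thesis unfolding mor unfolding ps force_tensor_cls[OF X v] force_tensor_cls[OF X v'] length_map nl[symmetric] tot_map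
    by (rule Tps_step_expl[OF X v g])
qed

lemma samp_cls:
  assumes X: "presheaf X" and x: "x \<in> Ob X (a+c)"
  shows "samp_sharp X n a (cls X a (c,x)) = cls (powps X n) a (tot (replicate n (c,x)), expl X a (replicate n (c,x)))"
proof -
  let ?P = "powps X n"
  have v: "valid X a (replicate n (c,x))" using x by (simp add: valid_def)
  have t: "Tnt (Tps ?P) (force_tensor X) a (cls (powps (Tps X) n) a (0, replicate n (cls X a (c,x))))
     = cls (Tps ?P) a (0, force_tensor X (a+0) (replicate n (cls X a (c,x))))"
    by (rule Tnt_cls) (rule F_resp[OF X])
  have f: "force_tensor X a (replicate n (cls X a (c,x))) = cls ?P a (tot (replicate n (c,x)), expl X a (replicate n (c,x)))"
    using force_tensor_cls[OF X v] by simp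
  show ?thesis unfolding samp_sharp_def kcomp_def copy_sharp_def etaT_def t
    using f muT_cls[OF presheaf_powps[OF X], of n a 0] by simp
qed

lemma S_resp:
  assumes X: "presheaf X" and C: "C \<in> TOb X (a+b)" and g: "is_inj b b' g"
  shows "cls (Tps (powps X n)) a (b, samp_sharp X n (a+b) C)
    = cls (Tps (powps X n)) a (b', samp_sharp X n (a+b') (TMor X (a+b) (a+b') (sum_inj a a id g) C))"
proof -
  from C obtain c x where Ce: "C = cls X (a+b) (c,x)" and x: "x \<in> Ob X (a+b+c)" by (rule TOb_E)
  have G: "is_inj (a+b) (a+b') (sum_inj a a id g)" using g by simp
  have x': "Mor X (a+b+c) (a+b'+c) (sum_inj (a+b) (a+b') (sum_inj a a id g) id) x \<in> Ob X (a+b'+c)"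
    using ps_Ob[OF X is_inj_sum[OF G is_inj_id'(2)] x] .
  have v: "valid X (a+b) (replicate n (c,x))" using x by (simp add: valid_def)
  show ?thesis
    using Tps_step_expl[OF X v g]
    by (simp add: Ce TMor_cls[OF X G] samp_cls[OF X x] samp_cls[OF X x'])
qed

lemma SAMP_cls:
  assumes X: "presheaf X" and x: "x \<in> Ob X (a+b+c)"
  shows "muT (powps X n) a (Tnt (Tps (powps X n)) (samp_sharp X n) a (cls (Tps X) a (b, cls X (a+b) (c,x))))
     = cls (powps X n) a (b + tot (replicate n (c,x)), expl X (a+b) (replicate n (c,x)))"
proof -
  have t: "Tnt (Tps (powps X n)) (samp_sharp X n) a (cls (Tps X) a (b, cls X (a+b) (c,x)))
     = cls (Tps (powps X n)) a (b, samp_sharp X n (a+b) (cls X (a+b) (c,x)))"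
    by (rule Tnt_cls) (simp add: S_resp[OF X])
  show ?thesis unfolding t samp_cls[OF X x] muT_cls[OF presheaf_powps[OF X]] ..
qed

lemma pushout:
  assumes f1: "is_inj m d1 f1" and f2: "is_inj m d2 f2"
  shows "\<exists>D p1 p2. is_inj d1 D p1 \<and> is_inj d2 D p2 \<and> (\<forall>i<m. p1 (f1 i) = p2 (f2 i))"
proof -
  define p2 where "p2 j = (if j \<in> f2 ` {..<m} then f1 (the_inv_into {..<m} f2 j) else d1 + j)" for j
  have i2: "inj_on f2 {..<m}" using f2 by (simp add: is_inj_def)
  have inv_lt: "the_inv_into {..<m} f2 j < m" if "j \<in> f2 ` {..<m}" for j
    using the_inv_into_into[OF i2 that] by auto
  have "is_inj d2 (d1+d2) p2"
  proof (rule is_injI)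
    fix j assume "j < d2"
    show "p2 j < d1 + d2"
    proof (cases "j \<in> f2 ` {..<m}")
      case True
      then have "f1 (the_inv_into {..<m} f2 j) < d1" using inv_lt is_inj_lt[OF f1] by blast
      then show ?thesis using True by (simp add: p2_def)
    next
      case False then show ?thesis using \<open>j < d2\<close> by (simp add: p2_def)
    qed
  next
    fix i j assume "i < d2" "j < d2" and e: "p2 i = p2 j"
    show "i = j"
    proof (cases "i \<in> f2 ` {..<m}"; cases "j \<in> f2 ` {..<m}")
      assume a1: "i \<in> f2 ` {..<m}" and a2: "j \<in> f2 ` {..<m}"
      then have "the_inv_into {..<m} f2 i = the_inv_into {..<m} f2 j"
        using e is_inj_inj[OF f1] inv_lt by (simp add: p2_def)
      then show ?thesis using f_the_inv_into_f[OF i2 a1] f_the_inv_into_f[OF i2 a2] by metis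
    next
      assume ai: "i \<in> f2 ` {..<m}" and aj: "j \<notin> f2 ` {..<m}"
      have "p2 i < d1" using ai inv_lt is_inj_lt[OF f1] by (simp add: p2_def)
      moreover have "p2 j \<ge> d1" using aj by (simp add: p2_def)
      ultimately show ?thesis using e by simp
    next
      assume ai: "i \<notin> f2 ` {..<m}" and aj: "j \<in> f2 ` {..<m}"
      have "p2 j < d1" using aj inv_lt is_inj_lt[OF f1] by (simp add: p2_def)
      moreover have "p2 i \<ge> d1" using ai by (simp add: p2_def)
      ultimately show ?thesis using e by simp
    next
      assume "i \<notin> f2 ` {..<m}" "j \<notin> f2 ` {..<m}"
      then show ?thesis using e by (simp add: p2_def)
    qed
  qed
  moreover have "\<forall>i<m. id (f1 i) = p2 (f2 i)"
    using the_inv_into_f_f[OF i2] by (simp add: p2_def)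
  ultimately show ?thesis using is_inj_id'(1)[of d1 d2] by blast
qed

lemma colim_char:
  assumes Y: "presheaf Y" and ce: "colim_eq Y a (b,x) q" and x: "x \<in> Ob Y (a+b)"
  shows "snd q \<in> Ob Y (a + fst q) \<and> (\<exists>d h h'. is_inj b d h \<and> is_inj (fst q) d h' \<and>
      Mor Y (a+b) (a+d) (sum_inj a a id h) x = Mor Y (a + fst q) (a+d) (sum_inj a a id h') (snd q))"
  using ce unfolding colim_eq_def
proof (induction rule: rtranclp_induct)
  case base
  show ?case using x by (auto intro!: exI[of _ b] exI[of _ id])
next
  case (step q r)
  from step.IH obtain d h h' where qv: "snd q \<in> Ob Y (a + fst q)" and h: "is_inj b d h" and h': "is_inj (fst q) d h'"
    and eq: "Mor Y (a+b) (a+d) (sum_inj a a id h) x = Mor Y (a + fst q) (a+d) (sum_inj a a id h') (snd q)" by blast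
  from step.hyps(2) consider (fw) "colim_step Y a q r" | (bw) "colim_step Y a r q" by auto
  then show ?case
  proof cases
    case fw
    then obtain b1 b2 g x1 where q: "q = (b1,x1)" and x1: "x1 \<in> Ob Y (a+b1)" and g: "is_inj b1 b2 g"
      and r: "r = (b2, Mor Y (a+b1) (a+b2) (sum_inj a a id g) x1)" unfolding colim_step_def by blast
    have h1: "is_inj b1 d h'" using h' q by simp
    obtain D p1 p2 where p1: "is_inj d D p1" and p2: "is_inj b2 D p2" and pe: "\<forall>i<b1. p1 (h' i) = p2 (g i)"
      using pushout[OF h1 g] by blast
    have "Mor Y (a+b) (a+D) (sum_inj a a id (p1 \<circ> h)) x
        = Mor Y (a+d) (a+D) (sum_inj a a id p1) (Mor Y (a+b) (a+d) (sum_inj a a id h) x)"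
      by (rule ps_comp[OF Y is_inj_sum_id[OF h] is_inj_sum_id[OF p1] x, symmetric]) (simp add: sum_inj_id_comp)
    also have "... = Mor Y (a+d) (a+D) (sum_inj a a id p1) (Mor Y (a+b1) (a+d) (sum_inj a a id h') x1)"
      using eq q by simp
    also have "... = Mor Y (a+b1) (a+D) (sum_inj a a id (p2 \<circ> g)) x1"
      by (rule ps_comp[OF Y is_inj_sum_id[OF h1] is_inj_sum_id[OF p1] x1]) (use pe in \<open>auto simp: sum_inj_def\<close>)
    also have "... = Mor Y (a+b2) (a+D) (sum_inj a a id p2) (Mor Y (a+b1) (a+b2) (sum_inj a a id g) x1)"
      by (rule ps_comp[OF Y is_inj_sum_id[OF g] is_inj_sum_id[OF p2] x1, symmetric]) (simp add: sum_inj_id_comp)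
    finally have "Mor Y (a+b) (a+D) (sum_inj a a id (p1 \<circ> h)) x = Mor Y (a+b2) (a+D) (sum_inj a a id p2) (Mor Y (a+b1) (a+b2) (sum_inj a a id g) x1)" .
    moreover have "is_inj b D (p1 \<circ> h)" using is_inj_comp[OF h p1] .
    moreover have "snd r \<in> Ob Y (a + fst r)" using r ps_Ob[OF Y is_inj_sum_id[OF g] x1] by simp
    ultimately have W: "snd r \<in> Ob Y (a + fst r) \<and> is_inj b D (p1 \<circ> h) \<and> is_inj (fst r) D p2 \<and>
       Mor Y (a+b) (a+D) (sum_inj a a id (p1 \<circ> h)) x = Mor Y (a + fst r) (a+D) (sum_inj a a id p2) (snd r)"
      using r p2 by simp
    then show ?thesis unfolding id_def by blast
  next
    case bw
    then obtain b0 b1 g x0 where r: "r = (b0,x0)" and x0: "x0 \<in> Ob Y (a+b0)" and g: "is_inj b0 b1 g"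
      and q: "q = (b1, Mor Y (a+b0) (a+b1) (sum_inj a a id g) x0)" unfolding colim_step_def by blast
    have h1: "is_inj b1 d h'" using h' q by simp
    have "Mor Y (a+b) (a+d) (sum_inj a a id h) x = Mor Y (a+b1) (a+d) (sum_inj a a id h') (Mor Y (a+b0) (a+b1) (sum_inj a a id g) x0)"
      using eq q by simp
    also have "... = Mor Y (a+b0) (a+d) (sum_inj a a id (h' \<circ> g)) x0"
      by (rule ps_comp[OF Y is_inj_sum_id[OF g] is_inj_sum_id[OF h1] x0]) (simp add: sum_inj_id_comp)
    finally have W: "snd r \<in> Ob Y (a + fst r) \<and> is_inj b d h \<and> is_inj (fst r) d (h' \<circ> g) \<and>
       Mor Y (a+b) (a+d) (sum_inj a a id h) x = Mor Y (a + fst r) (a+d) (sum_inj a a id (h' \<circ> g)) (snd r)"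
      using r x0 h is_inj_comp[OF g h1] by simp
    then show ?thesis unfolding id_def by blast
  qed
qed



lemma blk_le: "r < n \<Longrightarrow> r*c + c \<le> n*(c::nat)"
proof -
  assume "r < n"
  then have "Suc r * c \<le> n * c" by (intro mult_le_mono1) simp
  then show ?thesis by simp
qed

lemma blk_lt: "r < n \<Longrightarrow> j < c \<Longrightarrow> r*c + j < n*(c::nat)"
  using blk_le[of r n c] by linarith

lemma blk_inj: "j < c \<Longrightarrow> j' < c \<Longrightarrow> r*c + j = r'*c + (j'::nat) \<Longrightarrow> r = r'"
proof (rule ccontr)
  assume j: "j < c" and j': "j' < c" and e: "r*c + j = r'*c + j'" and ne: "r \<noteq> r'"
  show False
  proof (cases "r < r'")
    case True
    then have "r*c + c \<le> r'*c" by (rule blk_le)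
    then show False using e j by linarith
  next
    case False
    then have "r' < r" using ne by simp
    then have "r'*c + c \<le> r*c" by (rule blk_le)
    then show False using e j' by linarith
  qed
qed

lemma is_inj_blk: "s + c \<le> N \<Longrightarrow> is_inj (a+c) (a+N) (\<lambda>j. if j<a then j else a + s + (j-a))"
  by (rule is_injI) (auto split: if_splits)

lemma expl_rep_nth:
  assumes X: "presheaf X" and x: "x \<in> Ob X (a+c)"
  shows "i < n \<Longrightarrow> expl X a (replicate n (c,x)) ! i = Mor X (a+c) (a + n*c) (\<lambda>j. if j<a then j else a + (n - Suc i)*c + (j-a)) x"
proof (induction n arbitrary: i)
  case 0 then show ?case by simp
next
  case (Suc n)
  have e: "expl X a (replicate (Suc n) (c,x)) = Mor X (a+c) (a+n*c+c) (sum_inj a (a+n*c) id id) x # map (Mor X (a+n*c) (a+n*c+c) id) (expl X a (replicate n (c,x)))" by simp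
  have lv: "a + Suc n * c = a+n*c+c" by simp
  show ?case
  proof (cases i)
    case 0
    have "Mor X (a+c) (a+n*c+c) (sum_inj a (a+n*c) id id) x = Mor X (a+c) (a+n*c+c) (\<lambda>j. if j<a then j else a + (Suc n - Suc i)*c + (j-a)) x"
      by (rule ps_cong[OF X is_inj_shift _ x]) (simp add: sum_inj_def 0)
    then show ?thesis unfolding e lv 0 by simp
  next
    case (Suc i')
    then have i': "i' < n" using Suc.prems by simp
    have len: "length (expl X a (replicate n (c,x))) = n" using expl_Ob[OF X, of a "replicate n (c,x)"] x by (simp add: valid_def)
    have bl: "(n - Suc i')*c + c \<le> n*c" using blk_le[of "n - Suc i'" n c] i' by simp
    have "expl X a (replicate (Suc n) (c,x)) ! i = Mor X (a+n*c) (a+n*c+c) id (expl X a (replicate n (c,x)) ! i')"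
      unfolding e Suc using len i' by simp
    also have "... = Mor X (a+n*c) (a+n*c+c) id (Mor X (a+c) (a+n*c) (\<lambda>j. if j<a then j else a + (n - Suc i')*c + (j-a)) x)"
      using Suc.IH[OF i'] by simp
    also have "... = Mor X (a+c) (a+n*c+c) (\<lambda>j. if j<a then j else a + (n - Suc i')*c + (j-a)) x"
      by (rule ps_comp[OF X is_inj_blk[OF bl] is_inj_id'(1) x]) simp
    finally have calc: "expl X a (replicate (Suc n) (c,x)) ! i = Mor X (a+c) (a+n*c+c) (\<lambda>j. if j<a then j else a + (n - Suc i')*c + (j-a)) x" .
    have eqf: "(\<lambda>j. if j<a then j else a + (n - Suc i')*c + (j-a)) = (\<lambda>j. if j<a then j else a + (Suc n - Suc i)*c + (j-a))"
      using Suc by auto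
    show ?thesis unfolding lv eqf[symmetric] by (rule calc)
  qed
qed

lemma nth_side:
  assumes X: "presheaf X" and x: "x \<in> Ob X (a+b+c)" and h: "is_inj (b+n*c) d h" and r: "r < n"
  shows "map (Mor X (a+b+n*c) (a+d) (sum_inj a a id h)) (expl X (a+b) (replicate n (c,x))) ! (n - Suc r)
    = Mor X (a+b+c) (a+d) (sum_inj a a id (\<lambda>j. if j<b then h j else h (b + r*c + (j-b)))) x"
proof -
  have len: "length (expl X (a+b) (replicate n (c,x))) = n" using expl_Ob[OF X, of "a+b" "replicate n (c,x)"] x by (simp add: valid_def)
  have i: "n - Suc r < n" using r by simp
  have nn: "n - Suc (n - Suc r) = r" using r by simp
  have H: "is_inj (a+b+n*c) (a+d) (sum_inj a a id h)" using is_inj_sum_id[OF h] by (simp add: add.assoc)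
  have bl: "r*c + c \<le> n*c" using blk_le[OF r] .
  have "map (Mor X (a+b+n*c) (a+d) (sum_inj a a id h)) (expl X (a+b) (replicate n (c,x))) ! (n - Suc r)
     = Mor X (a+b+n*c) (a+d) (sum_inj a a id h) (Mor X (a+b+c) (a+b+n*c) (\<lambda>j. if j<a+b then j else a + b + r*c + (j-(a+b))) x)"
  proof -
    have en: "expl X (a+b) (replicate n (c,x)) ! (n - Suc r) = Mor X (a+b+c) (a+b+n*c) (\<lambda>j. if j<a+b then j else a + b + r*c + (j-(a+b))) x"
      using expl_rep_nth[OF X x i] unfolding nn .
    show ?thesis using len i by (simp add: en)
  qed
  also have "... = Mor X (a+b+c) (a+d) (sum_inj a a id (\<lambda>j. if j<b then h j else h (b + r*c + (j-b)))) x"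
  proof (rule ps_comp[OF X is_inj_blk[OF bl] H x])
    fix j assume "j < a+b+c"
    show "sum_inj a a id h (if j < a+b then j else a + b + r*c + (j-(a+b))) = sum_inj a a id (\<lambda>j. if j<b then h j else h (b + r*c + (j-b))) j"
    proof (cases "j < a+b")
      case True
      show ?thesis
      proof (cases "j < a")
        case True then show ?thesis by (simp add: sum_inj_def)
      next
        case False
        then have "j - a < b" using \<open>j < a+b\<close> by linarith
        then show ?thesis using False True by (simp add: sum_inj_def)
      qed
    next
      case False
      then have "a + b + r*c + (j-(a+b)) - a = b + r*c + (j - a - b)" by simp
      then show ?thesis using False by (simp add: sum_inj_def)
    qed
  qed
  finally show ?thesis .
qed



lemma pigeon:
  assumes h: "is_inj (b+n*c) d h" and h': "is_inj (b'+n*c') d h'" and n: "b + b' < n"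
  shows "\<exists>r<n. (\<forall>j<b. \<forall>j'<c'. h j \<noteq> h' (b' + r*c' + j')) \<and> (\<forall>j<c. \<forall>j'<b'. h (b + r*c + j) \<noteq> h' j')"
proof -
  define B1 where "B1 = {r. r < n \<and> (\<exists>j<b. \<exists>j'<c'. h j = h' (b' + r*c' + j'))}"
  define B2 where "B2 = {r. r < n \<and> (\<exists>j<c. \<exists>j'<b'. h (b + r*c + j) = h' j')}"
  define F1 where "F1 r = (SOME j. j<b \<and> (\<exists>j'<c'. h j = h' (b' + r*c' + j')))" for r
  define F2 where "F2 r = (SOME j'. j'<b' \<and> (\<exists>j<c. h (b + r*c + j) = h' j'))" for r
  have P1: "F1 r < b \<and> (\<exists>j'<c'. h (F1 r) = h' (b' + r*c' + j'))" if "r \<in> B1" for r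
  proof -
    have "\<exists>j. j<b \<and> (\<exists>j'<c'. h j = h' (b' + r*c' + j'))" using that unfolding B1_def by blast
    then show ?thesis unfolding F1_def by (rule someI_ex)
  qed
  have P2: "F2 r < b' \<and> (\<exists>j<c. h (b + r*c + j) = h' (F2 r))" if "r \<in> B2" for r
  proof -
    have "\<exists>j'. j'<b' \<and> (\<exists>j<c. h (b + r*c + j) = h' j')" using that unfolding B2_def by blast
    then show ?thesis unfolding F2_def by (rule someI_ex)
  qed
  have B1n: "r < n" if "r \<in> B1" for r using that unfolding B1_def by blast
  have B2n: "r < n" if "r \<in> B2" for r using that unfolding B2_def by blast
  have "inj_on F1 B1"
  proof (rule inj_onI)
    fix r1 r2 assume r1: "r1 \<in> B1" and r2: "r2 \<in> B1" and e: "F1 r1 = F1 r2"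
    from P1[OF r1] obtain j1 where j1: "j1 < c'" "h (F1 r1) = h' (b' + r1*c' + j1)" by blast
    from P1[OF r2] obtain j2 where j2: "j2 < c'" "h (F1 r2) = h' (b' + r2*c' + j2)" by blast
    have l1: "r1*c' + j1 < n*c'" using blk_lt[OF B1n[OF r1] j1(1)] .
    have l2: "r2*c' + j2 < n*c'" using blk_lt[OF B1n[OF r2] j2(1)] .
    have l1': "b' + r1*c' + j1 < b' + n*c'" using l1 by linarith
    have l2': "b' + r2*c' + j2 < b' + n*c'" using l2 by linarith
    have "h' (b' + r1*c' + j1) = h' (b' + r2*c' + j2)" using j1(2) j2(2) e by metis
    then have "b' + r1*c' + j1 = b' + r2*c' + j2" by (rule is_inj_inj[OF h' l1' l2'])
    then have "r1*c' + j1 = r2*c' + j2" by linarith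
    then show "r1 = r2" using blk_inj[OF j1(1) j2(1)] by blast
  qed
  moreover have "F1 ` B1 \<subseteq> {..<b}" using P1 by blast
  ultimately have c1: "card B1 \<le> b" using card_inj_on_le[of F1 B1 "{..<b}"] by simp
  have "inj_on F2 B2"
  proof (rule inj_onI)
    fix r1 r2 assume r1: "r1 \<in> B2" and r2: "r2 \<in> B2" and e: "F2 r1 = F2 r2"
    from P2[OF r1] obtain j1 where j1: "j1 < c" "h (b + r1*c + j1) = h' (F2 r1)" by blast
    from P2[OF r2] obtain j2 where j2: "j2 < c" "h (b + r2*c + j2) = h' (F2 r2)" by blast
    have l1: "r1*c + j1 < n*c" using blk_lt[OF B2n[OF r1] j1(1)] .
    have l2: "r2*c + j2 < n*c" using blk_lt[OF B2n[OF r2] j2(1)] .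
    have l1': "b + r1*c + j1 < b + n*c" using l1 by linarith
    have l2': "b + r2*c + j2 < b + n*c" using l2 by linarith
    have "h (b + r1*c + j1) = h (b + r2*c + j2)" using j1(2) j2(2) e by metis
    then have "b + r1*c + j1 = b + r2*c + j2" by (rule is_inj_inj[OF h l1' l2'])
    then have "r1*c + j1 = r2*c + j2" by linarith
    then show "r1 = r2" using blk_inj[OF j1(1) j2(1)] by blast
  qed
  moreover have "F2 ` B2 \<subseteq> {..<b'}" using P2 by blast
  ultimately have c2: "card B2 \<le> b'" using card_inj_on_le[of F2 B2 "{..<b'}"] by simp
  have sub: "B1 \<union> B2 \<subseteq> {..<n}" using B1n B2n by blast
  have fin: "finite (B1 \<union> B2)" by (rule finite_subset[OF sub]) simp
  have cu: "card (B1 \<union> B2) \<le> b + b'" using card_Un_le[of B1 B2] c1 c2 by linarith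
  have "\<not> {..<n} \<subseteq> B1 \<union> B2"
  proof
    assume "{..<n} \<subseteq> B1 \<union> B2"
    then have "card {..<n} \<le> card (B1 \<union> B2)" by (rule card_mono[OF fin])
    then show False using cu n by simp
  qed
  then obtain r where r: "r < n" "r \<notin> B1" "r \<notin> B2" by blast
  have "\<forall>j<b. \<forall>j'<c'. h j \<noteq> h' (b' + r*c' + j')" using r unfolding B1_def by blast
  moreover have "\<forall>j<c. \<forall>j'<b'. h (b + r*c + j) \<noteq> h' j'" using r unfolding B2_def by blast
  ultimately show ?thesis using r(1) by blast
qed



lemma side:
  assumes X: "presheaf X" and x: "x \<in> Ob X (a+b+c)" and u: "is_inj (b+c) d u"
    and inS: "\<And>j. j<b \<Longrightarrow> u j \<in> S" and outS: "\<And>j. j<c \<Longrightarrow> u (b+j) \<notin> S"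
  shows "cls (Tps X) a (b, cls X (a+b) (c,x)) = cls (Tps X) a (d, cls X (a+d) (d,
     Mor X (a+d) (a+d+d) (\<lambda>k. if k < a then k else if k - a \<in> S then k else k + d)
       (Mor X (a+b+c) (a+d) (sum_inj a a id u) x)))"
proof -
  let ?\<rho> = "\<lambda>k. if k < a then k else if k - a \<in> S then k else k + d"
  define \<phi> where "\<phi> j = u (b+j)" for j
  have ub: "is_inj b d u" using is_inj_mono[OF u] by simp
  have \<phi>: "is_inj c d \<phi>"
  proof (rule is_injI)
    fix j assume "j < c" then show "\<phi> j < d" unfolding \<phi>_def using is_inj_lt[OF u] by simp
  next
    fix i j assume "i < c" "j < c" "\<phi> i = \<phi> j"
    then show "i = j" unfolding \<phi>_def using is_inj_inj[OF u, of "b+i" "b+j"] by simp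
  qed
  have \<rho>: "is_inj (a+d) (a+d+d) ?\<rho>"
    by (rule is_injI) (auto split: if_splits)
  let ?G = "sum_inj (a+b) (a+d) (sum_inj a a id u) id"
  have G: "is_inj (a+b+c) (a+d+c) ?G" using is_inj_sum[OF is_inj_sum_id[OF ub] is_inj_id'(2)] .
  let ?z = "Mor X (a+b+c) (a+d+c) ?G x"
  have z: "?z \<in> Ob X (a+d+c)" using ps_Ob[OF X G x] .
  have U: "is_inj (a+b+c) (a+d) (sum_inj a a id u)" using is_inj_sum_id[OF u] by (simp add: add.assoc)
  have Cv: "cls X (a+b) (c,x) \<in> Ob (Tps X) (a+b)" using x by simp
  have e1: "cls (Tps X) a (b, cls X (a+b) (c,x)) = cls (Tps X) a (d, TMor X (a+b) (a+d) (sum_inj a a id u) (cls X (a+b) (c,x)))"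
    using step_cls[OF Cv ub] by simp
  have e2: "TMor X (a+b) (a+d) (sum_inj a a id u) (cls X (a+b) (c,x)) = cls X (a+d) (c, ?z)"
    using TMor_cls[OF X is_inj_sum_id[OF ub]] .
  have e3: "cls X (a+d) (c, ?z) = cls X (a+d) (d, Mor X (a+d+c) (a+d+d) (sum_inj (a+d) (a+d) id \<phi>) ?z)"
    by (rule step_cls[OF z \<phi>])
  have e4: "Mor X (a+d+c) (a+d+d) (sum_inj (a+d) (a+d) id \<phi>) ?z = Mor X (a+b+c) (a+d+d) (\<lambda>j. sum_inj (a+d) (a+d) id \<phi> (?G j)) x"
    by (rule ps_comp[OF X G is_inj_sum_id[OF \<phi>] x]) simp
  have e5: "Mor X (a+b+c) (a+d+d) (\<lambda>j. sum_inj (a+d) (a+d) id \<phi> (?G j)) x = Mor X (a+d) (a+d+d) ?\<rho> (Mor X (a+b+c) (a+d) (sum_inj a a id u) x)"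
  proof (rule ps_comp[OF X U \<rho> x, symmetric])
    fix j assume j: "j < a+b+c"
    show "?\<rho> (sum_inj a a id u j) = sum_inj (a+d) (a+d) id \<phi> (?G j)"
    proof (cases "j < a")
      case True then show ?thesis by (simp add: sum_inj_def)
    next
      case False
      show ?thesis
      proof (cases "j < a+b")
        case True
        have jb: "j - a < b" using True False by linarith
        have "u (j-a) \<in> S" "u (j-a) < d" using inS[OF jb] is_inj_lt[OF u] jb by auto
        then show ?thesis using True False by (simp add: sum_inj_def)
      next
        case nb: False
        have jc: "j-(a+b) < c" using j nb by linarith
        have e: "b + (j-(a+b)) = j - a" using nb by simp
        have nS: "u (j-a) \<notin> S" using outS[OF jc] e by simp
        have l: "sum_inj a a id u j = a + u (j-a)" using False by (simp add: sum_inj_def)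
        have l2: "?\<rho> (a + u (j-a)) = a + u (j-a) + d" using nS by simp
        have r1: "?G j = a + d + (j - (a+b))" using nb by (simp add: sum_inj_def)
        have r2: "sum_inj (a+d) (a+d) id \<phi> (a + d + (j-(a+b))) = a + d + u (j-a)"
          by (simp add: sum_inj_def \<phi>_def e)
        show ?thesis unfolding l l2 r1 r2 by simp
      qed
    qed
  qed
  show ?thesis by (simp only: e1 e2 e3 e4 e5)
qed

lemma core:
  assumes X: "presheaf X" and t: "t \<in> TOb (Tps X) a" and s: "s \<in> TOb (Tps X) a"
   and eq: "\<And>n. muT (powps X n) a (Tnt (Tps (powps X n)) (samp_sharp X n) a t) = muT (powps X n) a (Tnt (Tps (powps X n)) (samp_sharp X n) a s)"
  shows "t = s"
proof -
  from t obtain b C where te: "t = cls (Tps X) a (b, C)" and C: "C \<in> TOb X (a+b)" by (auto elim: TOb_E)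
  from C obtain c x where Ce: "C = cls X (a+b) (c,x)" and x: "x \<in> Ob X (a+b+c)" by (rule TOb_E)
  from s obtain b' C' where se: "s = cls (Tps X) a (b', C')" and C': "C' \<in> TOb X (a+b')" by (auto elim: TOb_E)
  from C' obtain c' x' where Ce': "C' = cls X (a+b') (c',x')" and x': "x' \<in> Ob X (a+b'+c')" by (rule TOb_E)
  define n where "n = b + b' + 1"
  have "cls (powps X n) a (b + n*c, expl X (a+b) (replicate n (c,x))) = cls (powps X n) a (b' + n*c', expl X (a+b') (replicate n (c',x')))"
    using eq[of n] unfolding te Ce se Ce' SAMP_cls[OF X x] SAMP_cls[OF X x'] by simp
  then have ce: "colim_eq (powps X n) a (b + n*c, expl X (a+b) (replicate n (c,x))) (b' + n*c', expl X (a+b') (replicate n (c',x')))"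
    by (simp add: cls_eq_iff)
  have Ev: "expl X (a+b) (replicate n (c,x)) \<in> Ob (powps X n) (a + (b + n*c))"
    using expl_Ob[OF X, of "a+b" "replicate n (c,x)"] x by (simp add: valid_def add.assoc)
  obtain d h h' where h: "is_inj (b+n*c) d h" and h': "is_inj (b'+n*c') d h'"
    and meq: "map (Mor X (a+(b+n*c)) (a+d) (sum_inj a a id h)) (expl X (a+b) (replicate n (c,x)))
       = map (Mor X (a+(b'+n*c')) (a+d) (sum_inj a a id h')) (expl X (a+b') (replicate n (c',x')))"
    using colim_char[OF presheaf_powps[OF X] ce Ev] by auto
  have meq': "map (Mor X (a+b+n*c) (a+d) (sum_inj a a id h)) (expl X (a+b) (replicate n (c,x)))
       = map (Mor X (a+b'+n*c') (a+d) (sum_inj a a id h')) (expl X (a+b') (replicate n (c',x')))"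
    using meq by (simp add: add.assoc)
  obtain r where r: "r < n" and A1: "\<forall>j<b. \<forall>j'<c'. h j \<noteq> h' (b' + r*c' + j')"
    and A2: "\<forall>j<c. \<forall>j'<b'. h (b + r*c + j) \<noteq> h' j'"
    using pigeon[OF h h'] n_def by auto
  define u where "u j = (if j < b then h j else h (b + r*c + (j-b)))" for j
  define u' where "u' j = (if j < b' then h' j else h' (b' + r*c' + (j-b')))" for j
  have KEY: "Mor X (a+b+c) (a+d) (sum_inj a a id u) x = Mor X (a+b'+c') (a+d) (sum_inj a a id u') x'"
    using nth_side[OF X x h r] nth_side[OF X x' h' r] meq' unfolding u_def u'_def by metis
  have bl: "r*c + c \<le> n*c" "r*c' + c' \<le> n*c'" using blk_le[OF r] by auto
  have u: "is_inj (b+c) d u"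
  proof (rule is_injI)
    fix j assume j: "j < b+c"
    show "u j < d"
    proof (cases "j < b")
      case True then show ?thesis using is_inj_lt[OF h, of j] by (simp add: u_def)
    next
      case False
      then have "b + r*c + (j-b) < b + n*c" using j bl by linarith
      then show ?thesis using is_inj_lt[OF h] False by (simp add: u_def)
    qed
  next
    fix i j assume i: "i < b+c" and j: "j < b+c" and e: "u i = u j"
    let ?I = "if i < b then i else b + r*c + (i-b)" and ?J = "if j < b then j else b + r*c + (j-b)"
    have "?I < b + n*c" "?J < b + n*c" using i j bl by auto
    moreover have "h ?I = h ?J" using e by (simp add: u_def split: if_splits)
    ultimately have "?I = ?J" by (rule is_inj_inj[OF h])
    then show "i = j" by (auto split: if_splits)
  qed
  have u': "is_inj (b'+c') d u'"
  proof (rule is_injI)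
    fix j assume j: "j < b'+c'"
    show "u' j < d"
    proof (cases "j < b'")
      case True then show ?thesis using is_inj_lt[OF h', of j] by (simp add: u'_def)
    next
      case False
      then have "b' + r*c' + (j-b') < b' + n*c'" using j bl by linarith
      then show ?thesis using is_inj_lt[OF h'] False by (simp add: u'_def)
    qed
  next
    fix i j assume i: "i < b'+c'" and j: "j < b'+c'" and e: "u' i = u' j"
    let ?I = "if i < b' then i else b' + r*c' + (i-b')" and ?J = "if j < b' then j else b' + r*c' + (j-b')"
    have "?I < b' + n*c'" "?J < b' + n*c'" using i j bl by auto
    moreover have "h' ?I = h' ?J" using e by (simp add: u'_def split: if_splits)
    ultimately have "?I = ?J" by (rule is_inj_inj[OF h'])
    then show "i = j" by (auto split: if_splits)
  qed
  define S where "S = u ` {..<b} \<union> u' ` {..<b'}"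
  have out1: "u (b+j) \<notin> S" if j: "j < c" for j
  proof
    assume "u (b+j) \<in> S"
    then consider (a) k where "k < b" "u (b+j) = u k" | (b) k where "k < b'" "u (b+j) = u' k"
      unfolding S_def by blast
    then show False
    proof cases
      case a then have "b + j = k" using is_inj_inj[OF u, of "b+j" k] j by simp
      then show False using a by simp
    next
      case b then show False using A2 j by (simp add: u_def u'_def)
    qed
  qed
  have out2: "u' (b'+j) \<notin> S" if j: "j < c'" for j
  proof
    assume "u' (b'+j) \<in> S"
    then consider (a) k where "k < b" "u' (b'+j) = u k" | (b) k where "k < b'" "u' (b'+j) = u' k"
      unfolding S_def by blast
    then show False
    proof cases
      case a then show False using A1 j by (simp add: u_def u'_def) (metis)
    next
      case b then have "b' + j = k" using is_inj_inj[OF u', of "b'+j" k] j by simp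
      then show False using b by simp
    qed
  qed
  have in1: "u j \<in> S" if "j < b" for j using that unfolding S_def by blast
  have in2: "u' j \<in> S" if "j < b'" for j using that unfolding S_def by blast
  have tt: "t = cls (Tps X) a (d, cls X (a+d) (d,
     Mor X (a+d) (a+d+d) (\<lambda>k. if k < a then k else if k - a \<in> S then k else k + d)
       (Mor X (a+b+c) (a+d) (sum_inj a a id u) x)))"
    unfolding te Ce by (rule side[OF X x u in1 out1])
  have ss: "s = cls (Tps X) a (d, cls X (a+d) (d,
     Mor X (a+d) (a+d+d) (\<lambda>k. if k < a then k else if k - a \<in> S then k else k + d)
       (Mor X (a+b'+c') (a+d) (sum_inj a a id u') x')))"
    unfolding se Ce' by (rule side[OF X x' u' in2 out2])
  show ?thesis unfolding tt ss KEY ..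
qed

theorem theorem9p6:
  fixes X :: "'a psh" and A :: "'b psh"
  assumes "presheaf X" and "presheaf A"
  shows "samp_jointly_monic_wrt X A"
  unfolding samp_jointly_monic_wrt_def
proof (intro allI impI)
  fix f g
  assume H: "nat_trans A (Tps (Tps X)) f \<and> nat_trans A (Tps (Tps X)) g \<and>
        (\<forall>n. nt_eq A (kcomp (powps X n) (samp_sharp X n) f) (kcomp (powps X n) (samp_sharp X n) g))"
  show "nt_eq A f g" unfolding nt_eq_def
  proof (intro allI impI)
    fix a y assume y: "y \<in> Ob A a"
    have ft: "f a y \<in> TOb (Tps X) a" using H y unfolding nat_trans_def by auto
    have gt: "g a y \<in> TOb (Tps X) a" using H y unfolding nat_trans_def by auto
    show "f a y = g a y"
    proof (rule core[OF assms(1) ft gt])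
      fix n
      show "muT (powps X n) a (Tnt (Tps (powps X n)) (samp_sharp X n) a (f a y)) = muT (powps X n) a (Tnt (Tps (powps X n)) (samp_sharp X n) a (g a y))"
        using H y unfolding nt_eq_def kcomp_def by blast
    qed
  qed
qed


end
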